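(* Let $\gamma>0$, $\gamma\neq1$ be constant. If $\gamma$ is irrational, then $N^{\rm alg}_{\mathbb{R}}(r)=N^{\rm geom}_{\mathbb{R}}(r)$ for all $r$. If $\gamma=p/q$ with $p,q$ positive coprime integers, then, as $r\to\infty$, \[ N^{\rm alg}_{\mathbb{R}}(r)=\Bigl(\Bigl|1-\frac pq\Bigr|+\frac2q\Bigr)\frac{r}{\pi}+O(1). \]
   Context: Half-line problem: for $\lambda\neq0$, find $(u,v)$ on $[0,1]$ with $-u''-\lambda^2u=0$, $-v''-\lambda^2\gamma^2v=0$, $u(0)=v(0)=0$, $u(1)=v(1)$, $u'(1)=v'(1)$; $\lambda$ is an ITE if a nontrivial pair exists. ITEs are the nonzero zeros of $F(\lambda)=\gamma\sin\lambda\cos(\gamma\lambda)-\sin(\gamma\lambda)\cos\lambda$. The algebraic multiplicity of an ITE is its order as a zero of $F$; the geometric multiplicity is $1$. $N^{\rm alg}_{\mathbb{R}}(r)$ (resp. $N^{\rm geom}_{\mathbb{R}}(r)$) is the number of real ITEs in $(0,r]$ counted with algebraic (resp. geometric) multiplicity. *)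

theory Defs
  imports "HOL-Analysis.Analysis" "HOL-Library.Landau_Symbols"
begin

text \<open>Characteristic function whose nonzero zeros are the interior transmission eigenvalues.\<close>
definition ite_F :: "real \<Rightarrow> real \<Rightarrow> real" where
  "ite_F \<gamma> l = \<gamma> * sin l * cos (\<gamma> * l) - sin (\<gamma> * l) * cos l"

definition real_ITEs :: "real \<Rightarrow> real \<Rightarrow> real set" where
  "real_ITEs \<gamma> r = {l. 0 < l \<and> l \<le> r \<and> ite_F \<gamma> l = 0}"

definition alg_mult :: "real \<Rightarrow> real \<Rightarrow> nat" where
  "alg_mult \<gamma> l = (LEAST n. (deriv ^^ n) (ite_F \<gamma>) l \<noteq> 0)"

definition N_alg :: "real \<Rightarrow> real \<Rightarrow> nat" where
  "N_alg \<gamma> r = (\<Sum>l\<in>real_ITEs \<gamma> r. alg_mult \<gamma> l)"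

text \<open>Geometric multiplicity of each ITE is 1.\<close>
definition N_geom :: "real \<Rightarrow> real \<Rightarrow> nat" where
  "N_geom \<gamma> r = (\<Sum>l\<in>real_ITEs \<gamma> r. (1::nat))"

end

theory Submission
  imports Defs
begin

definition Efun :: "real \<Rightarrow> real \<Rightarrow> real" where
  "Efun g l = (g - 1) * sin l * cos l / ((cos l)^2 + g * (sin l)^2)"
definition Dfun :: "real \<Rightarrow> real \<Rightarrow> real" where
  "Dfun g l = (g - 1) * l - arctan (Efun g l)"
definition rho2 :: "real \<Rightarrow> real \<Rightarrow> real" where
  "rho2 g l = (cos l)^2 + g^2 * (sin l)^2"

lemma Npos:
  fixes g l :: real
  assumes g: "g > 0" shows "(cos l)^2 + g * (sin l)^2 > 0"
proof -
  have "(cos l)^2 + (sin l)^2 = 1" by simp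
  hence "(cos l)^2 > 0 \<or> (sin l)^2 > 0" by (metis add.right_neutral not_less_iff_gr_or_eq power2_less_0 zero_less_one sum_power2_eq_zero_iff)
  thus ?thesis using g by (metis add_nonneg_pos add_pos_nonneg mult_pos_pos zero_le_power2 mult_nonneg_nonneg less_imp_le)
qed

lemma rho2pos:
  fixes g l :: real
  assumes g: "g > 0" shows "rho2 g l > 0"
  using Npos[of "g^2" l] g unfolding rho2_def by simp

lemma key_id:
  fixes g l :: real
  shows "((cos l)^2 + g * (sin l)^2)^2 + ((g - 1) * sin l * cos l)^2 = rho2 g l"
proof -
  have e: "\<And>x y::real. (x^2 + g * y^2)^2 + ((g - 1) * y * x)^2 = (x^2 + g^2*y^2) * (y^2+x^2)"
    by (simp add: algebra_simps power2_eq_square)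
  show ?thesis unfolding rho2_def using e[of "cos l" "sin l"] by simp
qed

lemma E_aux:
  fixes x y g :: real
  assumes "x^2 + y^2 = 1" "x^2 + g*y^2 \<noteq> 0"
  shows "(((0*y + x*1*(g-1))*x + -y*1*((g-1)*y)) * (x^2+g*y^2) - (g-1)*y*x*(real 2*(-y*1*x^(2-Suc 0)) + (0*y^2 + real 2*(x*1*y^(2-Suc 0))*g))) / ((x^2+g*y^2)*(x^2+g*y^2)) = (g-1)*(x^2 - g*y^2)/(x^2+g*y^2)^2"
proof -
  have "(((0*y + x*1*(g-1))*x + -y*1*((g-1)*y)) * (x^2+g*y^2) - (g-1)*y*x*(real 2*(-y*1*x^(2-Suc 0)) + (0*y^2 + real 2*(x*1*y^(2-Suc 0))*g)))
     = (g-1)*(x^2 - g*y^2)*(x^2+y^2)"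
    by (simp add: algebra_simps power2_eq_square)
  also have "\<dots> = (g-1)*(x^2 - g*y^2)" using assms(1) by simp
  finally show ?thesis by (simp add: power2_eq_square)
qed

lemma E_deriv:
  fixes g l :: real
  assumes g: "g > 0"
  shows "(Efun g has_real_derivative ((g-1)*((cos l)^2 - g*(sin l)^2)/((cos l)^2 + g * (sin l)^2)^2)) (at l)"
proof -
  have N: "(cos l)^2 + g * (sin l)^2 \<noteq> 0" using Npos[OF g, of l] by simp
  show ?thesis
  unfolding Efun_def
  apply (rule derivative_eq_intros refl)+
   apply (rule N)
  apply (rule E_aux)
  using N by simp_all
qed

lemma D_deriv:
  fixes g l :: real
  assumes g: "g > 0"
  shows "(Dfun g has_real_derivative ((g - 1) * g * (g + 1) * (sin l)^2 / rho2 g l)) (at l)"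
proof -
  define N where "N = (cos l)^2 + g * (sin l)^2"
  have N: "N > 0" using Npos[OF g, of l] N_def by simp
  have R: "rho2 g l > 0" using rho2pos[OF g] .
  have K: "N^2 + ((g - 1) * sin l * cos l)^2 = rho2 g l" using key_id N_def by simp
  have E: "1 + (Efun g l)^2 = rho2 g l / N^2"
    unfolding Efun_def N_def[symmetric] using N K by (simp add: field_simps power2_eq_square)
  have d: "(Dfun g has_real_derivative ((g - 1) - inverse (1 + (Efun g l)^2) * ((g-1)*((cos l)^2 - g*(sin l)^2)/N^2))) (at l)"
    unfolding Dfun_def N_def
    by (rule derivative_eq_intros E_deriv[OF g] refl)+ simp
  have eq: "(g - 1) - inverse (1 + (Efun g l)^2) * ((g-1)*((cos l)^2 - g*(sin l)^2)/N^2)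
      = (g - 1) * g * (g + 1) * (sin l)^2 / rho2 g l"
  proof -
    have "(g - 1) - inverse (1 + (Efun g l)^2) * ((g-1)*((cos l)^2 - g*(sin l)^2)/N^2)
       = (g-1) - (g-1)*((cos l)^2 - g*(sin l)^2) / rho2 g l"
      unfolding E using N R by (simp add: field_simps)
    also have "\<dots> = (g - 1) * (rho2 g l - ((cos l)^2 - g*(sin l)^2)) / rho2 g l"
      using R by (simp add: field_simps)
    also have "rho2 g l - ((cos l)^2 - g*(sin l)^2) = g * (g+1) * (sin l)^2"
      unfolding rho2_def by (simp add: algebra_simps power2_eq_square)
    finally show ?thesis by simp
  qed
  show ?thesis using d eq by simp
qed
lemma F_eq:
  fixes g l :: real
  assumes g: "g > 0"
  shows "ite_F g l = - sqrt (rho2 g l) * sin (Dfun g l)"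
proof -
  define N where "N = (cos l)^2 + g * (sin l)^2"
  define M where "M = (g - 1) * sin l * cos l"
  define A where "A = (g - 1) * l"
  have N: "N > 0" using Npos[OF g, of l] N_def by simp
  have R: "rho2 g l > 0" using rho2pos[OF g] .
  have K: "N^2 + M^2 = rho2 g l" using key_id N_def M_def by simp
  have E: "Efun g l = M / N" unfolding Efun_def M_def N_def ..
  have E1: "1 + (Efun g l)^2 = rho2 g l / N^2"
    unfolding E using N K by (simp add: field_simps power2_eq_square)
  have S: "sqrt (1 + (Efun g l)^2) = sqrt (rho2 g l) / N"
    unfolding E1 using N by (simp add: real_sqrt_divide)
  have c: "cos (arctan (Efun g l)) = N / sqrt (rho2 g l)"
    unfolding cos_arctan S using N R by simp
  have s: "sin (arctan (Efun g l)) = M / sqrt (rho2 g l)"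
    unfolding sin_arctan S using N R by (simp add: E)
  have sr: "sqrt (rho2 g l) > 0" using R by simp
  have D: "sqrt (rho2 g l) * sin (Dfun g l) = sin A * N - cos A * M"
    unfolding Dfun_def A_def[symmetric] sin_diff c s using sr by (simp add: field_simps)
  have gl: "g * l = A + l" unfolding A_def by (simp add: algebra_simps)
  have F: "ite_F g l = cos A * M - sin A * N"
    unfolding ite_F_def gl sin_add cos_add M_def N_def by (simp add: algebra_simps power2_eq_square)
  show ?thesis using D F by simp
qed

lemma h_deriv:
  fixes g t :: real
  assumes g: "g > 0"
  shows "((\<lambda>t. (g - 1) * Dfun g t) has_real_derivative ((g - 1)^2 * g * (g + 1) * (sin t)^2 / rho2 g t)) (at t)"
proof -
  have "((\<lambda>t. (g - 1) * Dfun g t) has_real_derivative (g - 1) * ((g - 1) * g * (g + 1) * (sin t)^2 / rho2 g t)) (at t)"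
    by (intro DERIV_cmult D_deriv g)
  thus ?thesis by (simp add: power2_eq_square mult.assoc)
qed

lemma h_cont:
  fixes g :: real
  assumes g: "g > 0"
  shows "continuous_on S (\<lambda>t. (g - 1) * Dfun g t)"
  by (rule continuous_at_imp_continuous_on) (use h_deriv[OF g] DERIV_isCont in blast)

lemma h_mono:
  fixes g x y :: real
  assumes g: "g > 0" and xy: "x \<le> y"
  shows "(g - 1) * Dfun g x \<le> (g - 1) * Dfun g y"
proof (rule DERIV_nonneg_imp_increasing_open[OF xy _ h_cont[OF g]])
  fix t assume "x < t" "t < y"
  have "(g - 1)^2 * g * (g + 1) * (sin t)^2 / rho2 g t \<ge> 0"
    using g rho2pos[OF g, of t] by simp
  thus "\<exists>y. ((\<lambda>t. (g - 1) * Dfun g t) has_real_derivative y) (at t) \<and> 0 \<le> y"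
    using h_deriv[OF g] by blast
qed

lemma sin_nz_between:
  fixes t :: real and n :: int
  assumes "n * pi < t" "t < (n + 1) * pi"
  shows "sin t \<noteq> 0"
proof
  assume "sin t = 0"
  then obtain i :: int where i: "t = i * pi" by (auto simp: sin_zero_iff_int2)
  have "real_of_int n < real_of_int i" using assms(1) i pi_gt_zero by (simp add: mult_less_cancel_right)
  moreover have "real_of_int i < real_of_int n + 1" using assms(2) i pi_gt_zero by (simp add: mult_less_cancel_right)
  ultimately have "n < i" "i < n + 1" by linarith+
  thus False by simp
qed

lemma h_strict:
  fixes g x y :: real
  assumes g: "g > 0" and g1: "g \<noteq> 1" and xy: "x < y"
  shows "(g - 1) * Dfun g x < (g - 1) * Dfun g y"
proof -
  define n where "n = \<lfloor>x / pi\<rfloor>"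
  have a: "real_of_int n \<le> x / pi" "x / pi < real_of_int n + 1"
    unfolding n_def using floor_correct[of "x/pi"] by linarith+
  have n1: "n * pi \<le> x" using a(1) pi_gt_zero by (simp add: field_simps)
  have n2: "x < (n + 1) * pi" using a(2) pi_gt_zero by (simp add: field_simps)
  define v where "v = min y ((n + 1) * pi)"
  have xv: "x < v" using xy n2 v_def by simp
  have "(g - 1) * Dfun g x < (g - 1) * Dfun g v"
  proof (rule DERIV_pos_imp_increasing_open[OF xv _ h_cont[OF g]])
    fix t assume t: "x < t" "t < v"
    have "sin t \<noteq> 0" by (rule sin_nz_between[of n]) (use t n1 v_def in auto)
    hence "(g - 1)^2 * g * (g + 1) * (sin t)^2 / rho2 g t > 0"
      using g g1 rho2pos[OF g, of t] by simp
    thus "\<exists>y. ((\<lambda>t. (g - 1) * Dfun g t) has_real_derivative y) (at t) \<and> 0 < y"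
      using h_deriv[OF g] by blast
  qed
  also have "\<dots> \<le> (g - 1) * Dfun g y" by (rule h_mono[OF g]) (simp add: v_def)
  finally show ?thesis .
qed

lemma count_zeros:
  fixes h :: "real \<Rightarrow> real" and r :: real
  assumes mono: "\<And>x y. x < y \<Longrightarrow> h x < h y" and cont: "continuous_on UNIV h"
    and h0: "h 0 = 0" and r: "r \<ge> 0"
  defines "S \<equiv> {l. 0 < l \<and> l \<le> r \<and> sin (h l) = 0}"
  shows "finite S \<and> card S = nat \<lfloor>h r / pi\<rfloor>"
proof -
  define f where "f l = \<lfloor>h l / pi\<rfloor>" for l
  define M where "M = \<lfloor>h r / pi\<rfloor>"
  have mono': "h x \<le> h y" if "x \<le> y" for x y
    using mono[of x y] that by (cases "x = y") auto
  have inj_h: "x = y" if "h x = h y" for x y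
    using mono[of x y] mono[of y x] that by (metis less_irrefl linorder_neqE)
  have hS: "h l = f l * pi" if "l \<in> S" for l
  proof -
    from that obtain i :: int where i: "h l = i * pi" unfolding S_def by (auto simp: sin_zero_iff_int2)
    hence "f l = i" unfolding f_def by simp
    thus ?thesis using i by simp
  qed
  have inj: "inj_on f S"
  proof
    fix x y assume "x \<in> S" "y \<in> S" "f x = f y"
    hence "h x = h y" using hS by simp
    thus "x = y" by (rule inj_h)
  qed
  have img: "f ` S = {1..M}"
  proof
    show "f ` S \<subseteq> {1..M}"
    proof
      fix i assume "i \<in> f ` S"
      then obtain l where l: "l \<in> S" "i = f l" by auto
      have "0 < h l" using mono[of 0 l] l h0 unfolding S_def by simp
      hence "0 < real_of_int i * pi" using hS[OF l(1)] l(2) by simp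
      hence "0 < i" using pi_gt_zero by (simp add: zero_less_mult_iff)
      moreover have "h l \<le> h r" using mono' l unfolding S_def by simp
      hence "real_of_int i * pi \<le> h r" using hS[OF l(1)] l(2) by simp
      hence "real_of_int i \<le> h r / pi" using pi_gt_zero by (simp add: field_simps)
      hence "i \<le> M" unfolding M_def by (simp add: le_floor_iff)
      ultimately show "i \<in> {1..M}" by simp
    qed
  next
    show "{1..M} \<subseteq> f ` S"
    proof
      fix m assume m: "m \<in> {1..M}"
      have "real_of_int m \<le> h r / pi" using m unfolding M_def by (simp add: le_floor_iff)
      hence le: "real_of_int m * pi \<le> h r" using pi_gt_zero by (simp add: field_simps)
      have pos: "0 < real_of_int m * pi" using m by simp
      obtain l where l: "0 \<le> l" "l \<le> r" "h l = m * pi"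
        using IVT'[of h 0 "m * pi" r] le pos h0 r continuous_on_subset[OF cont] by force
      have "l \<noteq> 0" using l(3) pos h0 by auto
      hence "l \<in> S" using l unfolding S_def by (simp add: sin_zero_iff_int2)
      moreover have "f l = m" unfolding f_def l(3) by simp
      ultimately show "m \<in> f ` S" by force
    qed
  qed
  have bij: "bij_betw f S {1..M}" using inj img by (simp add: bij_betw_def)
  have "finite S" using bij_betw_finite[OF bij] by simp
  moreover have "card S = card {1..M}" using bij_betw_same_card[OF bij] .
  ultimately show ?thesis unfolding M_def by simp
qed

lemma dF1:
  fixes g :: real
  shows "deriv (ite_F g) = (\<lambda>l. (1 - g^2) * sin l * sin (g * l))"
proof
  fix l
  have "(ite_F g has_real_derivative (1 - g^2) * sin l * sin (g * l)) (at l)"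
    unfolding ite_F_def[abs_def]
    by (rule derivative_eq_intros refl)+ (simp add: algebra_simps power2_eq_square)
  thus "deriv (ite_F g) l = (1 - g^2) * sin l * sin (g * l)" by (rule DERIV_imp_deriv)
qed

lemma dF2:
  fixes g :: real
  shows "deriv (\<lambda>l. (1 - g^2) * sin l * sin (g * l)) = (\<lambda>l. (1 - g^2) * (cos l * sin (g * l) + g * sin l * cos (g * l)))"
proof
  fix l
  have "((\<lambda>l. (1 - g^2) * sin l * sin (g * l)) has_real_derivative (1 - g^2) * (cos l * sin (g * l) + g * sin l * cos (g * l))) (at l)"
    by (rule derivative_eq_intros refl)+ (simp add: algebra_simps)
  thus "deriv (\<lambda>l. (1 - g^2) * sin l * sin (g * l)) l = (1 - g^2) * (cos l * sin (g * l) + g * sin l * cos (g * l))" by (rule DERIV_imp_deriv)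
qed

lemma dF3:
  fixes g :: real
  shows "deriv (\<lambda>l. (1 - g^2) * (cos l * sin (g * l) + g * sin l * cos (g * l))) = (\<lambda>l. (1 - g^2) * (2 * g * cos l * cos (g * l) - (1 + g^2) * sin l * sin (g * l)))"
proof
  fix l
  have "((\<lambda>l. (1 - g^2) * (cos l * sin (g * l) + g * sin l * cos (g * l))) has_real_derivative (1 - g^2) * (2 * g * cos l * cos (g * l) - (1 + g^2) * sin l * sin (g * l))) (at l)"
    by (rule derivative_eq_intros refl)+ (simp add: algebra_simps power2_eq_square)
  thus "deriv (\<lambda>l. (1 - g^2) * (cos l * sin (g * l) + g * sin l * cos (g * l))) l = (1 - g^2) * (2 * g * cos l * cos (g * l) - (1 + g^2) * sin l * sin (g * l))" by (rule DERIV_imp_deriv)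
qed

lemma cos_nz_if_sin0: "sin (x::real) = 0 \<Longrightarrow> cos x \<noteq> 0"
  using sin_cos_squared_add[of x] by auto

lemma mult_zero_classify:
  fixes g l :: real
  assumes g: "g > 0" "g \<noteq> 1" and F: "ite_F g l = 0"
  shows "alg_mult g l = (if sin l = 0 then 3 else 1)"
proof -
  have "(1 - g) * (1 + g) \<noteq> 0" using g by simp
  hence g2: "1 - g^2 \<noteq> 0" by (simp add: algebra_simps power2_eq_square)
  have d1: "(deriv ^^ 1) (ite_F g) l = (1 - g^2) * sin l * sin (g * l)" by (simp add: dF1)
  have e2: "(deriv ^^ 2) (ite_F g) = deriv (deriv (ite_F g))" by (simp add: numeral_2_eq_2)
  have e3: "(deriv ^^ 3) (ite_F g) = deriv (deriv (deriv (ite_F g)))" by (simp add: numeral_3_eq_3)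
  have d2: "(deriv ^^ 2) (ite_F g) l = (1 - g^2) * (cos l * sin (g * l) + g * sin l * cos (g * l))"
    unfolding e2 dF1 dF2 ..
  have d3: "(deriv ^^ 3) (ite_F g) l = (1 - g^2) * (2 * g * cos l * cos (g * l) - (1 + g^2) * sin l * sin (g * l))"
    unfolding e3 dF1 dF2 dF3 ..
  have d0: "(deriv ^^ 0) (ite_F g) l = 0" using F by simp
  show ?thesis
  proof (cases "sin l = 0")
    case True
    have c: "cos l \<noteq> 0" using cos_nz_if_sin0[OF True] .
    have sg: "sin (g * l) = 0" using F True c unfolding ite_F_def by simp
    have cg: "cos (g * l) \<noteq> 0" using cos_nz_if_sin0[OF sg] .
    have "alg_mult g l = 3" unfolding alg_mult_def
    proof (rule Least_equality)
      show "(deriv ^^ 3) (ite_F g) l \<noteq> 0" unfolding d3 using True sg c cg g2 g by simp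
      fix n assume n: "(deriv ^^ n) (ite_F g) l \<noteq> 0"
      show "3 \<le> n"
      proof (rule ccontr)
        assume "\<not> 3 \<le> n"
        hence "n = 0 \<or> n = 1 \<or> n = 2" by auto
        thus False using n d0 d1 d2 True sg by auto
      qed
    qed
    thus ?thesis using True by simp
  next
    case False
    have sg: "sin (g * l) \<noteq> 0"
    proof
      assume sg: "sin (g * l) = 0"
      have "cos (g * l) \<noteq> 0" using cos_nz_if_sin0[OF sg] .
      thus False using F False sg g unfolding ite_F_def by simp
    qed
    have "alg_mult g l = 1" unfolding alg_mult_def
    proof (rule Least_equality)
      show "(deriv ^^ 1) (ite_F g) l \<noteq> 0" unfolding d1 using False sg g2 by simp
      fix n assume n: "(deriv ^^ n) (ite_F g) l \<noteq> 0"
      show "1 \<le> n" using n d0 by (cases n) auto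
    qed
    thus ?thesis using False by simp
  qed
qed

definition hfun :: "real \<Rightarrow> real \<Rightarrow> real" where
  "hfun g l = (g - 1) * Dfun g l / \<bar>g - 1\<bar>"

lemma hfun_props:
  fixes g :: real
  assumes g: "g > 0" "g \<noteq> 1"
  shows "\<And>x y. x < y \<Longrightarrow> hfun g x < hfun g y"
    and "continuous_on UNIV (hfun g)"
    and "hfun g 0 = 0"
    and "\<And>l. sin (hfun g l) = 0 \<longleftrightarrow> ite_F g l = 0"
    and "\<And>l. \<bar>hfun g l - \<bar>g - 1\<bar> * l\<bar> \<le> pi / 2"
proof -
  have a: "\<bar>g - 1\<bar> > 0" using g by simp
  show "hfun g x < hfun g y" if "x < y" for x y
    using h_strict[OF g that] a unfolding hfun_def by (simp add: divide_strict_right_mono)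
  show "continuous_on UNIV (hfun g)" unfolding hfun_def
    by (intro continuous_on_divide h_cont[OF g(1)] continuous_on_const) (use a in auto)
  show "hfun g 0 = 0" unfolding hfun_def Dfun_def Efun_def by simp
  have hD: "hfun g l = Dfun g l \<or> hfun g l = - Dfun g l" for l
  proof (cases "g > 1")
    case True thus ?thesis unfolding hfun_def by simp
  next
    case False
    hence "1 - g > 0" "\<bar>g - 1\<bar> = 1 - g" using g by auto
    hence "hfun g l = - Dfun g l" unfolding hfun_def by (simp add: field_simps)
    thus ?thesis by simp
  qed
  show "sin (hfun g l) = 0 \<longleftrightarrow> ite_F g l = 0" for l
  proof -
    have "sqrt (rho2 g l) > 0" using rho2pos[OF g(1)] by simp
    hence "ite_F g l = 0 \<longleftrightarrow> sin (Dfun g l) = 0" using F_eq[OF g(1)] by simp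
    thus ?thesis using hD[of l] by auto
  qed
  show "\<bar>hfun g l - \<bar>g - 1\<bar> * l\<bar> \<le> pi / 2" for l
  proof -
    have b: "\<bar>arctan (Efun g l)\<bar> \<le> pi / 2" using arctan_bounded[of "Efun g l"] by auto
    have "hfun g l - \<bar>g - 1\<bar> * l = arctan (Efun g l) \<or> hfun g l - \<bar>g - 1\<bar> * l = - arctan (Efun g l)"
      unfolding hfun_def Dfun_def using g by (cases "g > 1") (auto simp: field_simps)
    thus ?thesis using b by auto
  qed
qed

lemma count_S:
  fixes g r :: real
  assumes g: "g > 0" "g \<noteq> 1" and r: "r \<ge> 0"
  shows "finite (real_ITEs g r) \<and> card (real_ITEs g r) = nat \<lfloor>hfun g r / pi\<rfloor>"
proof -
  have "real_ITEs g r = {l. 0 < l \<and> l \<le> r \<and> sin (hfun g l) = 0}"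
    unfolding real_ITEs_def using hfun_props(4)[OF g] by auto
  thus ?thesis using count_zeros[OF hfun_props(1-3)[OF g] r] by simp
qed

lemma finite_S:
  fixes g r :: real
  assumes g: "g > 0" "g \<noteq> 1"
  shows "finite (real_ITEs g r)"
proof (cases "r \<ge> 0")
  case True thus ?thesis using count_S[OF g True] by simp
next
  case False
  hence "real_ITEs g r = {}" unfolding real_ITEs_def by auto
  thus ?thesis by simp
qed

lemma natfloor_approx:
  fixes x :: real
  assumes "x \<ge> -1"
  shows "\<bar>real (nat \<lfloor>x\<rfloor>) - x\<bar> \<le> 1"
proof (cases "x \<ge> 0")
  case True
  hence "real (nat \<lfloor>x\<rfloor>) = of_int \<lfloor>x\<rfloor>" by simp
  thus ?thesis using floor_correct[of x] by linarith
next
  case False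
  hence "nat \<lfloor>x\<rfloor> = 0" by simp
  thus ?thesis using False assms by simp
qed

lemma sin_both_zero:
  fixes g l :: real
  assumes F: "ite_F g l = 0" and s: "sin l = 0"
  shows "sin (g * l) = 0"
  using F cos_nz_if_sin0[OF s] s unfolding ite_F_def by simp

lemma N_alg_split:
  fixes g r :: real
  assumes g: "g > 0" "g \<noteq> 1"
  shows "N_alg g r = card (real_ITEs g r) + 2 * card {l \<in> real_ITEs g r. sin l = 0}"
proof -
  have "N_alg g r = (\<Sum>l\<in>real_ITEs g r. (1::nat) + (if sin l = 0 then 2 else 0))"
    unfolding N_alg_def
    by (rule sum.cong[OF refl]) (use mult_zero_classify[OF g] in \<open>auto simp: real_ITEs_def\<close>)
  also have "\<dots> = card (real_ITEs g r) + (\<Sum>l\<in>real_ITEs g r. if sin l = 0 then 2 else 0)"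
    unfolding sum.distrib by simp
  also have "(\<Sum>l\<in>real_ITEs g r. if sin l = 0 then (2::nat) else 0) = (\<Sum>l\<in>{l \<in> real_ITEs g r. sin l = 0}. 2)"
    by (rule sum.inter_filter[symmetric, OF finite_S[OF g]])
  finally show ?thesis by simp
qed

lemma irr_no_triple:
  fixes g l :: real
  assumes g: "g \<notin> \<rat>" and l: "l > 0" and F: "ite_F g l = 0"
  shows "sin l \<noteq> 0"
proof
  assume s: "sin l = 0"
  have sg: "sin (g * l) = 0" by (rule sin_both_zero[OF F s])
  obtain n :: int where n: "l = n * pi" using s by (auto simp: sin_zero_iff_int2)
  obtain m :: int where m: "g * l = m * pi" using sg by (auto simp: sin_zero_iff_int2)
  have "real_of_int n \<noteq> 0" using n l by auto
  moreover have "g * real_of_int n = real_of_int m" using n m pi_gt_zero by simp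
  ultimately have "g = real_of_int m / real_of_int n" by (simp add: field_simps)
  hence "g \<in> \<rat>" by simp
  thus False using g by simp
qed

lemma rat_triple:
  fixes p q :: nat and l :: real
  assumes pq: "0 < p" "0 < q" "coprime p q" and l: "l > 0"
  shows "(ite_F (real p / real q) l = 0 \<and> sin l = 0) \<longleftrightarrow> sin (l / real q) = 0"
proof
  assume A: "ite_F (real p / real q) l = 0 \<and> sin l = 0"
  have sg: "sin (real p / real q * l) = 0" using sin_both_zero A by blast
  obtain n :: int where n: "l = n * pi" using A by (auto simp: sin_zero_iff_int2)
  obtain m :: int where m: "real p / real q * l = m * pi" using sg by (auto simp: sin_zero_iff_int2)
  have "real p * real_of_int n = real_of_int m * real q" using n m pi_gt_zero pq by (simp add: field_simps)
  hence "real_of_int (int p * n) = real_of_int (m * int q)" by simp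
  hence eq: "int p * n = m * int q" by (simp only: of_int_eq_iff)
  have "int q dvd int p * n" unfolding eq by simp
  moreover have "coprime (int q) (int p)" using pq(3) by (simp add: coprime_commute)
  ultimately have "int q dvd n" by (simp add: coprime_dvd_mult_right_iff)
  then obtain k where k: "n = int q * k" by (auto elim: dvdE)
  have "l / real q = real_of_int k * pi" using n k pq by simp
  thus "sin (l / real q) = 0" by (simp add: sin_zero_iff_int2)
next
  assume B: "sin (l / real q) = 0"
  obtain k :: int where k: "l / real q = k * pi" using B by (auto simp: sin_zero_iff_int2)
  have l1: "l = real_of_int (k * int q) * pi" using k pq by (simp add: field_simps)
  have l2: "real p / real q * l = real_of_int (k * int p) * pi" using k pq by (simp add: field_simps)
  have s1: "sin l = 0" unfolding l1 by (simp only: sin_zero_iff_int2) blast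
  have s2: "sin (real p / real q * l) = 0" unfolding l2 by (simp only: sin_zero_iff_int2) blast
  show "ite_F (real p / real q) l = 0 \<and> sin l = 0" using s1 s2 unfolding ite_F_def by simp
qed

theorem theorem3:
  fixes \<gamma> :: real
  assumes "\<gamma> > 0" and "\<gamma> \<noteq> 1"
  shows "(\<gamma> \<notin> \<rat> \<longrightarrow> (\<forall>r. N_alg \<gamma> r = N_geom \<gamma> r)) \<and>
         (\<forall>p q :: nat. 0 < p \<and> 0 < q \<and> coprime p q \<and> \<gamma> = real p / real q \<longrightarrow>
            (\<lambda>r. real (N_alg \<gamma> r) - (\<bar>1 - real p / real q\<bar> + 2 / real q) * r / pi)
              \<in> O[at_top](\<lambda>_. 1))"
proof (intro conjI impI allI)
  have g: "\<gamma> > 0" "\<gamma> \<noteq> 1" using assms by auto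
  fix r :: real
  assume irr: "\<gamma> \<notin> \<rat>"
  have e: "{l \<in> real_ITEs \<gamma> r. sin l = 0} = {}"
    using irr_no_triple[OF irr] unfolding real_ITEs_def by auto
  have "N_alg \<gamma> r = card (real_ITEs \<gamma> r) + 2 * card ({}::real set)"
    using N_alg_split[OF g, of r] unfolding e .
  hence "N_alg \<gamma> r = card (real_ITEs \<gamma> r)" by simp
  thus "N_alg \<gamma> r = N_geom \<gamma> r" unfolding N_geom_def by simp
next
  have g: "\<gamma> > 0" "\<gamma> \<noteq> 1" using assms by auto
  fix p q :: nat
  assume H: "0 < p \<and> 0 < q \<and> coprime p q \<and> \<gamma> = real p / real q"
  hence pq: "0 < p" "0 < q" "coprime p q" and gpq: "\<gamma> = real p / real q" by auto
  define c where "c = \<bar>1 - real p / real q\<bar> + 2 / real q"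
  have qpos: "real q > 0" using pq by simp
  have bound: "\<bar>real (N_alg \<gamma> r) - c * r / pi\<bar> \<le> 4" if r: "r \<ge> 0" for r
  proof -
    have T: "{l \<in> real_ITEs \<gamma> r. sin l = 0} = {l. 0 < l \<and> l \<le> r \<and> sin (l / real q) = 0}"
      unfolding real_ITEs_def gpq using rat_triple[OF pq] by auto
    have cT: "card {l. 0 < l \<and> l \<le> r \<and> sin (l / real q) = 0} = nat \<lfloor>(r / real q) / pi\<rfloor>"
    proof -
      have m: "\<And>x y. x < y \<Longrightarrow> x / real q < y / real q" using qpos by (simp add: divide_strict_right_mono)
      have c: "continuous_on UNIV (\<lambda>l. l / real q)" by (intro continuous_intros) (use qpos in auto)
      show ?thesis using count_zeros[of "\<lambda>l. l / real q" r, OF m c _ r] by simp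
    qed
    have cS: "card (real_ITEs \<gamma> r) = nat \<lfloor>hfun \<gamma> r / pi\<rfloor>" using count_S[OF g r] by simp
    have N: "real (N_alg \<gamma> r) = real (nat \<lfloor>hfun \<gamma> r / pi\<rfloor>) + 2 * real (nat \<lfloor>(r / real q) / pi\<rfloor>)"
      using N_alg_split[OF g, of r] T cT cS by simp
    have hb: "\<bar>hfun \<gamma> r - \<bar>\<gamma> - 1\<bar> * r\<bar> \<le> pi / 2" by (rule hfun_props(5)[OF g])
    have hb': "\<bar>hfun \<gamma> r / pi - \<bar>\<gamma> - 1\<bar> * r / pi\<bar> \<le> 1 / 2"
    proof -
      have "\<bar>hfun \<gamma> r / pi - \<bar>\<gamma> - 1\<bar> * r / pi\<bar> = \<bar>hfun \<gamma> r - \<bar>\<gamma> - 1\<bar> * r\<bar> / pi"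
        by (simp add: diff_divide_distrib[symmetric])
      also have "\<dots> \<le> (pi / 2) / pi" using hb by (simp add: divide_right_mono)
      finally show ?thesis by simp
    qed
    have nn: "\<bar>\<gamma> - 1\<bar> * r / pi \<ge> 0" using r by simp
    have a1: "\<bar>real (nat \<lfloor>hfun \<gamma> r / pi\<rfloor>) - hfun \<gamma> r / pi\<bar> \<le> 1"
      by (rule natfloor_approx) (use hb' nn in linarith)
    have a2: "\<bar>real (nat \<lfloor>(r / real q) / pi\<rfloor>) - (r / real q) / pi\<bar> \<le> 1"
    proof (rule natfloor_approx)
      have "(r / real q) / pi \<ge> 0" using r qpos by simp
      thus "(r / real q) / pi \<ge> -1" by linarith
    qed
    have ceq: "c * r / pi = \<bar>\<gamma> - 1\<bar> * r / pi + 2 * ((r / real q) / pi)"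
      unfolding c_def gpq by (simp add: abs_minus_commute field_simps)
    show ?thesis unfolding N ceq using a1 a2 hb' by linarith
  qed
  have "eventually (\<lambda>r. norm (real (N_alg \<gamma> r) - c * r / pi) \<le> 4 * norm (1::real)) at_top"
    using eventually_ge_at_top[of "0::real"] by eventually_elim (use bound in simp)
  thus "(\<lambda>r. real (N_alg \<gamma> r) - (\<bar>1 - real p / real q\<bar> + 2 / real q) * r / pi) \<in> O[at_top](\<lambda>_. 1)"
    unfolding c_def by (rule bigoI)
qed

end
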